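(* Let $\gamma_1,\gamma_2\in[0,1)$, $\beta\ge0$, let $q_1^\star$ be the unique solution of $b_1(q_1)=0$ and $q_2^\star$ the unique solution of $b_2(q_1^\star,q_2)=0$, and let $\pi_2^\star$ be the policy induced by $q_2^\star$. Suppose $l_1^\star,l_2^\star:\mathcal S\times\mathcal A\to\mathbb R$ with $l_2^\star\ge0$ satisfy, for all functions $h$ on $\mathcal S\times\mathcal A$, $$\langle l_2^\star,(I-\gamma_2P_2^{\pi_2^\star})h\rangle_{\rho_2}=\langle q_2^\star,h\rangle_{\rho_2},\qquad \langle l_1^\star,(I-\gamma_1P_1^\mu)h\rangle_{\rho_1}=\beta\langle q_1^\star,h\rangle_{\rho_1}+\langle l_2^\star,(I-\Pi_\mu)h\rangle_{\rho_2}.$$ Then $(q_1^\star,q_2^\star,l_1^\star,l_2^\star)$ is a saddle point of $\mathcal L^\beta_{\rm coup}$, i.e. $\mathcal L^\beta_{\rm coup}(q_1^\star,q_2^\star,l_1,l_2)\le \mathcal L^\beta_{\rm coup}(q_1^\star,q_2^\star,l_1^\star,l_2^\star)\le\mathcal L^\beta_{\rm coup}(q_1,q_2,l_1^\star,l_2^\star)$ for all $q_1,q_2,l_1,l_2$, and for every $(q_1,q_2)$, $$\mathcal L^\beta_{\rm coup}(q_1,q_2,l_1^\star,l_2^\star)-\mathcal L^\beta_{\rm coup}(q_1^\star,q_2^\star,l_1^\star,l_2^\star)\ge\frac\beta2\|q_1-q_1^\star\|_{\rho_1}^2+\frac12\|q_2-q_2^\star\|_{\rho_2}^2.$$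
   Context: Setup: $\mathcal S$ and $\mathcal A$ are finite sets; functions on $\mathcal S\times\mathcal A$ are real vectors. For a probability distribution $\rho$ on $\mathcal S\times\mathcal A$, $\langle f,h\rangle_\rho=\sum_{s,a}\rho(s,a)f(s,a)h(s,a)$, $\|f\|_\rho^2=\langle f,f\rangle_\rho$; $\rho_1,\rho_2$ are probability distributions on $\mathcal S\times\mathcal A$. $P_1,P_2$ are transition kernels. $\mu$ is an anchor policy, $g:\mathcal S\to\mathbb R$, $C\in\mathbb R$, $u_g^\star$ a given function on $\mathcal S\times\mathcal A$. $(\Pi_\mu q)(s,a):=\sum_{a'}\mu(a'\mid s)q(s,a')$; $(P_1^\mu q)(s,a):=\sum_{s'}P_1(s'\mid s,a)\sum_{a'}\mu(a'\mid s')q(s',a')$; for $v:\mathcal S\to\mathbb R$, $(P_2v)(s,a):=\sum_{s'}P_2(s'\mid s,a)v(s')$; for a policy $\pi$, $(P_2^\pi h)(s,a):=\sum_{s'}P_2(s'\mid s,a)\sum_{a'}\pi(a'\mid s')h(s',a')$. With $\tau_2>0$ and full-support $\pi_{2,\rm ref}$, $\Omega(q)(s):=\tau_2\log\sum_a\pi_{2,\rm ref}(a\mid s)e^{q(s,a)/\tau_2}$, and the policy induced by $q$ is $\pi_q(a\mid s)=\pi_{2,\rm ref}(a\mid s)e^{q(s,a)/\tau_2}/\sum_{a'}\pi_{2,\rm ref}(a'\mid s)e^{q(s,a')/\tau_2}$. Residuals $b_1(q_1):=u_g^\star+\gamma_1P_1^\mu q_1-q_1$, $b_2(q_1,q_2):=(I-\Pi_\mu)q_1+g+C+\gamma_2P_2\Omega(q_2)-q_2$.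 Coupled Lagrangian: $\mathcal L^\beta_{\rm coup}(q_1,q_2,l_1,l_2):=\frac\beta2\|q_1\|_{\rho_1}^2+\frac12\|q_2\|_{\rho_2}^2+\langle l_1,b_1(q_1)\rangle_{\rho_1}+\langle l_2,b_2(q_1,q_2)\rangle_{\rho_2}$. *)

theory Defs
  imports Complex_Main
begin

definition ip :: "('s::finite \<Rightarrow> 'a::finite \<Rightarrow> real) \<Rightarrow> ('s \<Rightarrow> 'a \<Rightarrow> real) \<Rightarrow> ('s \<Rightarrow> 'a \<Rightarrow> real) \<Rightarrow> real" where
  "ip \<rho> f h = (\<Sum>s\<in>UNIV. \<Sum>a\<in>UNIV. \<rho> s a * f s a * h s a)"

definition normsq :: "('s::finite \<Rightarrow> 'a::finite \<Rightarrow> real) \<Rightarrow> ('s \<Rightarrow> 'a \<Rightarrow> real) \<Rightarrow> real" where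
  "normsq \<rho> f = ip \<rho> f f"

definition is_dist :: "('s::finite \<Rightarrow> 'a::finite \<Rightarrow> real) \<Rightarrow> bool" where
  "is_dist \<rho> \<longleftrightarrow> (\<forall>s a. 0 \<le> \<rho> s a) \<and> (\<Sum>s\<in>UNIV. \<Sum>a\<in>UNIV. \<rho> s a) = 1"

definition is_kernel :: "('s::finite \<Rightarrow> 'a::finite \<Rightarrow> 's \<Rightarrow> real) \<Rightarrow> bool" where
  "is_kernel P \<longleftrightarrow> (\<forall>s a s'. 0 \<le> P s a s') \<and> (\<forall>s a. (\<Sum>s'\<in>UNIV. P s a s') = 1)"

definition is_policy :: "('s::finite \<Rightarrow> 'a::finite \<Rightarrow> real) \<Rightarrow> bool" where
  "is_policy \<pi> \<longleftrightarrow> (\<forall>s a. 0 \<le> \<pi> s a) \<and> (\<forall>s. (\<Sum>a\<in>UNIV. \<pi> s a) = 1)"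

text \<open>(Pi_mu q)(s,a) = sum_a' mu(a'|s) q(s,a'); here mu s a' = mu(a'|s).\<close>
definition Pi_pol :: "('s::finite \<Rightarrow> 'a::finite \<Rightarrow> real) \<Rightarrow> ('s \<Rightarrow> 'a \<Rightarrow> real) \<Rightarrow> 's \<Rightarrow> 'a \<Rightarrow> real" where
  "Pi_pol \<mu> q s a = (\<Sum>a'\<in>UNIV. \<mu> s a' * q s a')"

text \<open>(P^pi q)(s,a) = sum_s' P(s'|s,a) sum_a' pi(a'|s') q(s',a'); P s a s' = P(s'|s,a).\<close>
definition P_pol :: "('s::finite \<Rightarrow> 'a::finite \<Rightarrow> 's \<Rightarrow> real) \<Rightarrow> ('s \<Rightarrow> 'a \<Rightarrow> real) \<Rightarrow> ('s \<Rightarrow> 'a \<Rightarrow> real) \<Rightarrow> 's \<Rightarrow> 'a \<Rightarrow> real" where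
  "P_pol P \<pi> q s a = (\<Sum>s'\<in>UNIV. P s a s' * (\<Sum>a'\<in>UNIV. \<pi> s' a' * q s' a'))"

definition P_val :: "('s::finite \<Rightarrow> 'a::finite \<Rightarrow> 's \<Rightarrow> real) \<Rightarrow> ('s \<Rightarrow> real) \<Rightarrow> 's \<Rightarrow> 'a \<Rightarrow> real" where
  "P_val P v s a = (\<Sum>s'\<in>UNIV. P s a s' * v s')"

definition Omega :: "real \<Rightarrow> ('s::finite \<Rightarrow> 'a::finite \<Rightarrow> real) \<Rightarrow> ('s \<Rightarrow> 'a \<Rightarrow> real) \<Rightarrow> 's \<Rightarrow> real" where
  "Omega \<tau> piref q s = \<tau> * ln (\<Sum>a\<in>UNIV. piref s a * exp (q s a / \<tau>))"

definition pol_of :: "real \<Rightarrow> ('s::finite \<Rightarrow> 'a::finite \<Rightarrow> real) \<Rightarrow> ('s \<Rightarrow> 'a \<Rightarrow> real) \<Rightarrow> 's \<Rightarrow> 'a \<Rightarrow> real" where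
  "pol_of \<tau> piref q s a = piref s a * exp (q s a / \<tau>) / (\<Sum>a'\<in>UNIV. piref s a' * exp (q s a' / \<tau>))"

definition b1 :: "('s::finite \<Rightarrow> 'a::finite \<Rightarrow> real) \<Rightarrow> real \<Rightarrow> ('s \<Rightarrow> 'a \<Rightarrow> 's \<Rightarrow> real) \<Rightarrow> ('s \<Rightarrow> 'a \<Rightarrow> real) \<Rightarrow> ('s \<Rightarrow> 'a \<Rightarrow> real) \<Rightarrow> 's \<Rightarrow> 'a \<Rightarrow> real" where
  "b1 ug \<gamma>1 P1 \<mu> q1 s a = ug s a + \<gamma>1 * P_pol P1 \<mu> q1 s a - q1 s a"

definition b2 :: "('s::finite \<Rightarrow> 'a::finite \<Rightarrow> real) \<Rightarrow> ('s \<Rightarrow> real) \<Rightarrow> real \<Rightarrow> real \<Rightarrow> ('s \<Rightarrow> 'a \<Rightarrow> 's \<Rightarrow> real) \<Rightarrow> real \<Rightarrow> ('s \<Rightarrow> 'a \<Rightarrow> real)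
     \<Rightarrow> ('s \<Rightarrow> 'a \<Rightarrow> real) \<Rightarrow> ('s \<Rightarrow> 'a \<Rightarrow> real) \<Rightarrow> 's \<Rightarrow> 'a \<Rightarrow> real" where
  "b2 \<mu> g C \<gamma>2 P2 \<tau> piref q1 q2 s a =
     q1 s a - Pi_pol \<mu> q1 s a + g s + C + \<gamma>2 * P_val P2 (Omega \<tau> piref q2) s a - q2 s a"

definition Lcoup :: "real \<Rightarrow> ('s::finite \<Rightarrow> 'a::finite \<Rightarrow> real) \<Rightarrow> ('s \<Rightarrow> 'a \<Rightarrow> real)
     \<Rightarrow> ('s \<Rightarrow> 'a \<Rightarrow> real) \<Rightarrow> real \<Rightarrow> ('s \<Rightarrow> 'a \<Rightarrow> 's \<Rightarrow> real) \<Rightarrow> ('s \<Rightarrow> 'a \<Rightarrow> real)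
     \<Rightarrow> ('s \<Rightarrow> real) \<Rightarrow> real \<Rightarrow> real \<Rightarrow> ('s \<Rightarrow> 'a \<Rightarrow> 's \<Rightarrow> real) \<Rightarrow> real \<Rightarrow> ('s \<Rightarrow> 'a \<Rightarrow> real)
     \<Rightarrow> ('s \<Rightarrow> 'a \<Rightarrow> real) \<Rightarrow> ('s \<Rightarrow> 'a \<Rightarrow> real) \<Rightarrow> ('s \<Rightarrow> 'a \<Rightarrow> real) \<Rightarrow> ('s \<Rightarrow> 'a \<Rightarrow> real) \<Rightarrow> real" where
  "Lcoup \<beta> \<rho>1 \<rho>2 ug \<gamma>1 P1 \<mu> g C \<gamma>2 P2 \<tau> piref q1 q2 l1 l2 =
     \<beta> / 2 * normsq \<rho>1 q1 + 1 / 2 * normsq \<rho>2 q2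
     + ip \<rho>1 l1 (b1 ug \<gamma>1 P1 \<mu> q1) + ip \<rho>2 l2 (b2 \<mu> g C \<gamma>2 P2 \<tau> piref q1 q2)"

end

theory Submission
  imports Defs
begin

lemma gibbs:
  fixes p x y :: "'a::finite \<Rightarrow> real" and \<tau> :: real
  assumes pp: "\<forall>a. 0 < p a" and tau: "0 < \<tau>"
  shows "\<tau> * ln (\<Sum>a\<in>UNIV. p a * exp (x a / \<tau>)) - \<tau> * ln (\<Sum>a\<in>UNIV. p a * exp (y a / \<tau>))
         \<ge> (\<Sum>a\<in>UNIV. (p a * exp (y a / \<tau>) / (\<Sum>a'\<in>UNIV. p a' * exp (y a' / \<tau>))) * (x a - y a))"
proof -
  define Zx where "Zx = (\<Sum>a\<in>UNIV. p a * exp (x a / \<tau>))"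
  define Zy where "Zy = (\<Sum>a\<in>UNIV. p a * exp (y a / \<tau>))"
  define w where "w a = p a * exp (y a / \<tau>) / Zy" for a
  define m where "m = (\<Sum>a\<in>UNIV. w a * (x a - y a)) / \<tau>"
  have Zy: "Zy > 0" unfolding Zy_def
    by (rule sum_pos) (simp_all add: pp)
  have Zx: "Zx > 0" unfolding Zx_def
    by (rule sum_pos) (simp_all add: pp)
  have w0: "w a \<ge> 0" for a unfolding w_def using Zy pp by (auto intro!: divide_nonneg_pos less_imp_le)
  have w1: "(\<Sum>a\<in>UNIV. w a) = 1" unfolding w_def using Zy
    by (simp add: sum_divide_distrib[symmetric] Zy_def)
  have ratio: "Zx / Zy = (\<Sum>a\<in>UNIV. w a * exp ((x a - y a) / \<tau>))"
  proof -
    have "w a * exp ((x a - y a) / \<tau>) = p a * exp (x a / \<tau>) / Zy" for a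
    proof -
      have "exp (y a / \<tau>) * exp ((x a - y a) / \<tau>) = exp (x a / \<tau>)"
        by (simp add: exp_add[symmetric] diff_divide_distrib)
      then show ?thesis unfolding w_def by (metis (no_types) mult.assoc times_divide_eq_left)
    qed
    then show ?thesis by (simp add: Zx_def sum_divide_distrib)
  qed
  have pt: "w a * exp ((x a - y a) / \<tau>) \<ge> exp m * (w a + w a * ((x a - y a) / \<tau>) - m * w a)" for a
  proof -
    have "exp ((x a - y a) / \<tau>) = exp m * exp ((x a - y a) / \<tau> - m)"
      by (simp add: exp_add[symmetric])
    moreover have "exp ((x a - y a) / \<tau> - m) \<ge> 1 + ((x a - y a) / \<tau> - m)"
      by (rule exp_ge_add_one_self)
    ultimately have "exp ((x a - y a) / \<tau>) \<ge> exp m * (1 + ((x a - y a) / \<tau> - m))"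
      by simp
    then have "w a * exp ((x a - y a) / \<tau>) \<ge> w a * (exp m * (1 + ((x a - y a) / \<tau> - m)))"
      using w0 by (simp add: mult_left_mono)
    then show ?thesis by (simp add: algebra_simps)
  qed
  have "(\<Sum>a\<in>UNIV. w a * exp ((x a - y a) / \<tau>)) \<ge> (\<Sum>a\<in>UNIV. exp m * (w a + w a * ((x a - y a) / \<tau>) - m * w a))"
    by (rule sum_mono) (rule pt)
  also have "(\<Sum>a\<in>UNIV. exp m * (w a + w a * ((x a - y a) / \<tau>) - m * w a))
      = exp m * ((\<Sum>a\<in>UNIV. w a) + (\<Sum>a\<in>UNIV. w a * (x a - y a)) / \<tau> - m * (\<Sum>a\<in>UNIV. w a))"
  proof -
    have "(\<Sum>a\<in>UNIV. w a + w a * ((x a - y a) / \<tau>) - m * w a)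
        = (\<Sum>a\<in>UNIV. w a) + (\<Sum>a\<in>UNIV. w a * (x a - y a)) / \<tau> - m * (\<Sum>a\<in>UNIV. w a)"
      by (simp add: sum.distrib sum_subtractf sum_distrib_left sum_divide_distrib)
    then show ?thesis by (simp add: sum_distrib_left[symmetric])
  qed
  also have "\<dots> = exp m" using w1 m_def by simp
  finally have "Zx / Zy \<ge> exp m" using ratio by simp
  then have "ln (Zx / Zy) \<ge> m" using Zx Zy
    by (metis divide_pos_pos ln_exp ln_le_cancel_iff exp_gt_zero)
  then have "ln Zx - ln Zy \<ge> m" using Zx Zy by (simp add: ln_div)
  then have "\<tau> * (ln Zx - ln Zy) \<ge> \<tau> * m" using tau by (simp add: mult_left_mono)
  then show ?thesis using tau unfolding m_def Zx_def[symmetric] Zy_def[symmetric] w_def[abs_def]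
    by (simp add: algebra_simps)
qed


lemma ip_add: "ip \<rho> f (\<lambda>s a. h s a + k s a) = ip \<rho> f h + ip \<rho> f k"
  by (simp add: ip_def sum.distrib algebra_simps)

lemma ip_diff: "ip \<rho> f (\<lambda>s a. h s a - k s a) = ip \<rho> f h - ip \<rho> f k"
  by (simp add: ip_def sum_subtractf algebra_simps)

lemma ip_minus: "ip \<rho> f (\<lambda>s a. - h s a) = - ip \<rho> f h"
  by (simp add: ip_def sum_negf)

lemma ip_zero: "ip \<rho> f (\<lambda>s a. 0) = 0"
  by (simp add: ip_def)

lemma ip_nonneg: "(\<forall>s a. 0 \<le> \<rho> s a) \<Longrightarrow> (\<forall>s a. 0 \<le> f s a) \<Longrightarrow> (\<forall>s a. 0 \<le> h s a) \<Longrightarrow> 0 \<le> ip \<rho> f h"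
  unfolding ip_def by (intro sum_nonneg) simp

lemma normsq_nonneg: "(\<forall>s a. 0 \<le> \<rho> s a) \<Longrightarrow> 0 \<le> normsq \<rho> f"
  unfolding normsq_def ip_def by (intro sum_nonneg) (simp add: mult.assoc)

lemma normsq_diff: "normsq \<rho> q - normsq \<rho> qs = 2 * ip \<rho> qs (\<lambda>s a. q s a - qs s a) + normsq \<rho> (\<lambda>s a. q s a - qs s a)"
proof -
  have "normsq \<rho> q - normsq \<rho> qs = (\<Sum>s\<in>UNIV. \<Sum>a\<in>UNIV. \<rho> s a * q s a * q s a - \<rho> s a * qs s a * qs s a)"
    by (simp add: normsq_def ip_def sum_subtractf)
  also have "\<dots> = (\<Sum>s\<in>UNIV. \<Sum>a\<in>UNIV. 2 * (\<rho> s a * qs s a * (q s a - qs s a)) + \<rho> s a * (q s a - qs s a) * (q s a - qs s a))"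
    by (intro sum.cong refl) (simp add: algebra_simps)
  also have "\<dots> = 2 * ip \<rho> qs (\<lambda>s a. q s a - qs s a) + normsq \<rho> (\<lambda>s a. q s a - qs s a)"
    by (simp add: normsq_def ip_def sum.distrib sum_distrib_left)
  finally show ?thesis .
qed

lemma P_pol_diff: "P_pol P \<pi> q s a - P_pol P \<pi> q' s a = P_pol P \<pi> (\<lambda>s a. q s a - q' s a) s a"
  by (simp add: P_pol_def sum_subtractf right_diff_distrib)

lemma Pi_pol_diff: "Pi_pol \<mu> q s a - Pi_pol \<mu> q' s a = Pi_pol \<mu> (\<lambda>s a. q s a - q' s a) s a"
  by (simp add: Pi_pol_def sum_subtractf right_diff_distrib)

theorem theorem3p3:
  fixes \<rho>1 \<rho>2 \<mu> piref ug q1s q2s l1s l2s :: "'s::finite \<Rightarrow> 'a::finite \<Rightarrow> real"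
    and P1 P2 :: "'s \<Rightarrow> 'a \<Rightarrow> 's \<Rightarrow> real"
    and g :: "'s \<Rightarrow> real"
    and C \<gamma>1 \<gamma>2 \<beta> \<tau> :: real
  defines "L \<equiv> Lcoup \<beta> \<rho>1 \<rho>2 ug \<gamma>1 P1 \<mu> g C \<gamma>2 P2 \<tau> piref"
  assumes rho1: "is_dist \<rho>1" and rho2: "is_dist \<rho>2"
    and P1: "is_kernel P1" and P2: "is_kernel P2"
    and mu: "is_policy \<mu>"
    and piref: "is_policy piref" and piref_pos: "\<forall>s a. 0 < piref s a"
    and tau: "0 < \<tau>"
    and g1: "0 \<le> \<gamma>1" "\<gamma>1 < 1" and g2: "0 \<le> \<gamma>2" "\<gamma>2 < 1"
    and beta: "0 \<le> \<beta>"
    and q1s_sol: "b1 ug \<gamma>1 P1 \<mu> q1s = (\<lambda>s a. 0)"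
    and q1s_uniq: "\<forall>q1. b1 ug \<gamma>1 P1 \<mu> q1 = (\<lambda>s a. 0) \<longrightarrow> q1 = q1s"
    and q2s_sol: "b2 \<mu> g C \<gamma>2 P2 \<tau> piref q1s q2s = (\<lambda>s a. 0)"
    and q2s_uniq: "\<forall>q2. b2 \<mu> g C \<gamma>2 P2 \<tau> piref q1s q2 = (\<lambda>s a. 0) \<longrightarrow> q2 = q2s"
    and l2s_nonneg: "\<forall>s a. 0 \<le> l2s s a"
    and stat2: "\<forall>h. ip \<rho>2 l2s (\<lambda>s a. h s a - \<gamma>2 * P_pol P2 (pol_of \<tau> piref q2s) h s a)
                    = ip \<rho>2 q2s h"
    and stat1: "\<forall>h. ip \<rho>1 l1s (\<lambda>s a. h s a - \<gamma>1 * P_pol P1 \<mu> h s a)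
                    = \<beta> * ip \<rho>1 q1s h + ip \<rho>2 l2s (\<lambda>s a. h s a - Pi_pol \<mu> h s a)"
  shows "(\<forall>q1 q2 l1 l2.
            L q1s q2s l1 l2 \<le> L q1s q2s l1s l2s \<and> L q1s q2s l1s l2s \<le> L q1 q2 l1s l2s)
       \<and> (\<forall>q1 q2. L q1 q2 l1s l2s - L q1s q2s l1s l2s
            \<ge> \<beta> / 2 * normsq \<rho>1 (\<lambda>s a. q1 s a - q1s s a)
              + 1 / 2 * normsq \<rho>2 (\<lambda>s a. q2 s a - q2s s a))"
proof -
  have r1: "\<forall>s a. 0 \<le> \<rho>1 s a" and r2: "\<forall>s a. 0 \<le> \<rho>2 s a"
    using rho1 rho2 by (auto simp: is_dist_def)
  have P2nn: "\<forall>s a s'. 0 \<le> P2 s a s'" using P2 by (auto simp: is_kernel_def)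
  define pis where "pis = pol_of \<tau> piref q2s"
  have Lstar: "L q1s q2s l1 l2 = \<beta> / 2 * normsq \<rho>1 q1s + 1 / 2 * normsq \<rho>2 q2s" for l1 l2
    by (simp add: L_def Lcoup_def q1s_sol q2s_sol ip_zero)
  have main: "L q1 q2 l1s l2s - L q1s q2s l1s l2s
            \<ge> \<beta> / 2 * normsq \<rho>1 (\<lambda>s a. q1 s a - q1s s a)
              + 1 / 2 * normsq \<rho>2 (\<lambda>s a. q2 s a - q2s s a)" for q1 q2
  proof -
    define d1 where "d1 = (\<lambda>s a. q1 s a - q1s s a)"
    define d2 where "d2 = (\<lambda>s a. q2 s a - q2s s a)"
    define R where "R = (\<lambda>s a. \<gamma>2 * (P_val P2 (Omega \<tau> piref q2) s a - P_val P2 (Omega \<tau> piref q2s) s a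
                                  - P_pol P2 pis d2 s a))"
    have hb1: "b1 ug \<gamma>1 P1 \<mu> q1 = (\<lambda>s a. - (d1 s a - \<gamma>1 * P_pol P1 \<mu> d1 s a))"
    proof (intro ext)
      fix s a
      have "b1 ug \<gamma>1 P1 \<mu> q1s s a = 0" using q1s_sol by (simp add: fun_eq_iff)
      moreover have "P_pol P1 \<mu> q1 s a - P_pol P1 \<mu> q1s s a = P_pol P1 \<mu> d1 s a"
        unfolding d1_def by (rule P_pol_diff)
      ultimately show "b1 ug \<gamma>1 P1 \<mu> q1 s a = - (d1 s a - \<gamma>1 * P_pol P1 \<mu> d1 s a)"
        unfolding b1_def d1_def by (simp add: algebra_simps)
    qed
    have hb2: "b2 \<mu> g C \<gamma>2 P2 \<tau> piref q1 q2 = (\<lambda>s a. (d1 s a - Pi_pol \<mu> d1 s a) + R s a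
                   - (d2 s a - \<gamma>2 * P_pol P2 pis d2 s a))"
    proof (intro ext)
      fix s a
      have "b2 \<mu> g C \<gamma>2 P2 \<tau> piref q1s q2s s a = 0" using q2s_sol by (simp add: fun_eq_iff)
      moreover have "Pi_pol \<mu> q1 s a - Pi_pol \<mu> q1s s a = Pi_pol \<mu> d1 s a"
        unfolding d1_def by (rule Pi_pol_diff)
      ultimately show "b2 \<mu> g C \<gamma>2 P2 \<tau> piref q1 q2 s a = (d1 s a - Pi_pol \<mu> d1 s a) + R s a
                   - (d2 s a - \<gamma>2 * P_pol P2 pis d2 s a)"
        unfolding b2_def d1_def d2_def R_def by (simp add: algebra_simps)
    qed
    have Rnn: "\<forall>s a. 0 \<le> R s a"
    proof (intro allI)
      fix s a
      have "P_val P2 (Omega \<tau> piref q2) s a - P_val P2 (Omega \<tau> piref q2s) s a - P_pol P2 pis d2 s a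
          = (\<Sum>s'\<in>UNIV. P2 s a s' * (Omega \<tau> piref q2 s' - Omega \<tau> piref q2s s'
               - (\<Sum>a'\<in>UNIV. pis s' a' * d2 s' a')))"
        by (simp add: P_val_def P_pol_def sum_subtractf[symmetric] right_diff_distrib)
      also have "\<dots> \<ge> 0"
      proof (intro sum_nonneg mult_nonneg_nonneg)
        fix s'
        show "0 \<le> P2 s a s'" using P2nn by simp
        have "Omega \<tau> piref q2 s' - Omega \<tau> piref q2s s' \<ge> (\<Sum>a'\<in>UNIV. pis s' a' * d2 s' a')"
          unfolding Omega_def pis_def pol_of_def d2_def
          using gibbs[where p="piref s'" and \<tau>=\<tau> and x="q2 s'" and y="q2s s'"] piref_pos tau by simp
        then show "0 \<le> Omega \<tau> piref q2 s' - Omega \<tau> piref q2s s' - (\<Sum>a'\<in>UNIV. pis s' a' * d2 s' a')"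
          by simp
      qed
      finally show "0 \<le> R s a" unfolding R_def using g2 by simp
    qed
    have ipR: "ip \<rho>2 l2s R \<ge> 0" using ip_nonneg[OF r2 l2s_nonneg Rnn] .
    have e1: "ip \<rho>1 l1s (b1 ug \<gamma>1 P1 \<mu> q1) = - (\<beta> * ip \<rho>1 q1s d1 + ip \<rho>2 l2s (\<lambda>s a. d1 s a - Pi_pol \<mu> d1 s a))"
      unfolding hb1 ip_minus using stat1 by simp
    have e2: "ip \<rho>2 l2s (b2 \<mu> g C \<gamma>2 P2 \<tau> piref q1 q2) = ip \<rho>2 l2s (\<lambda>s a. d1 s a - Pi_pol \<mu> d1 s a)
               + ip \<rho>2 l2s R - ip \<rho>2 q2s d2"
      unfolding hb2 ip_diff[of _ _ "\<lambda>s a. (d1 s a - Pi_pol \<mu> d1 s a) + R s a"] ip_add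
      using stat2 pis_def by simp
    have n1: "normsq \<rho>1 q1 - normsq \<rho>1 q1s = 2 * ip \<rho>1 q1s d1 + normsq \<rho>1 d1"
      unfolding d1_def by (rule normsq_diff)
    have n2: "normsq \<rho>2 q2 - normsq \<rho>2 q2s = 2 * ip \<rho>2 q2s d2 + normsq \<rho>2 d2"
      unfolding d2_def by (rule normsq_diff)
    have "L q1 q2 l1s l2s - L q1s q2s l1s l2s = \<beta> / 2 * (normsq \<rho>1 q1 - normsq \<rho>1 q1s)
          + 1 / 2 * (normsq \<rho>2 q2 - normsq \<rho>2 q2s)
          + ip \<rho>1 l1s (b1 ug \<gamma>1 P1 \<mu> q1) + ip \<rho>2 l2s (b2 \<mu> g C \<gamma>2 P2 \<tau> piref q1 q2)"
      by (simp add: Lstar) (simp add: L_def Lcoup_def field_simps)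
    also have "\<dots> = \<beta> / 2 * normsq \<rho>1 d1 + 1 / 2 * normsq \<rho>2 d2 + ip \<rho>2 l2s R"
      unfolding n1 n2 e1 e2 by (simp add: algebra_simps)
    finally show ?thesis using ipR unfolding d1_def d2_def by simp
  qed
  have nn: "0 \<le> \<beta> / 2 * normsq \<rho>1 (\<lambda>s a. q1 s a - q1s s a) + 1 / 2 * normsq \<rho>2 (\<lambda>s a. q2 s a - q2s s a)" for q1 q2
    using normsq_nonneg[OF r1] normsq_nonneg[OF r2] beta by simp
  show ?thesis
  proof (intro conjI allI)
    fix q1 q2 l1 l2
    show "L q1s q2s l1 l2 \<le> L q1s q2s l1s l2s" by (simp add: Lstar)
    show "L q1s q2s l1s l2s \<le> L q1 q2 l1s l2s" using main[of q1 q2] nn[of q1 q2] by simp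
  next
    fix q1 q2
    show "L q1 q2 l1s l2s - L q1s q2s l1s l2s
            \<ge> \<beta> / 2 * normsq \<rho>1 (\<lambda>s a. q1 s a - q1s s a)
              + 1 / 2 * normsq \<rho>2 (\<lambda>s a. q2 s a - q2s s a)" by (rule main)
  qed
qed

end
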